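(* Let $(S_n)_{n\ge0}$ be a random walk on $\mathbb R$ with i.i.d. increments, $S_0=0$, $\mathbb E[S_1]>0$ and $\mathbb E[(S_1^+)^2]<\infty$, and let $\tau(t)=\inf\{n\ge0:S_n>t\}$ for $t\ge0$. Then for every $0<a<1$, $t\,\mathbb P(S_{\tau(t)-1}<at)\to0$ as $t\to\infty$. *)

theory Defs
  imports "HOL-Probability.Probability"
begin

definition rw :: "(nat \<Rightarrow> 'a \<Rightarrow> real) \<Rightarrow> nat \<Rightarrow> 'a \<Rightarrow> real" where
  "rw X n \<omega> = (\<Sum>i<n. X i \<omega>)"

(* first passage time tau(t) = inf {n >= 0. S_n > t} (arbitrary value if the set is empty,
   which happens only on a null set under the theorem's hypotheses) *)
definition passage :: "(nat \<Rightarrow> 'a \<Rightarrow> real) \<Rightarrow> real \<Rightarrow> 'a \<Rightarrow> nat" where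
  "passage X t \<omega> = (LEAST n. rw X n \<omega> > t)"

end

theory Submission imports Defs begin

locale rwalk = prob_space M for M :: "'a measure" +
  fixes X :: "nat \<Rightarrow> 'a \<Rightarrow> real"
  assumes Xm[measurable]: "\<And>i. X i \<in> borel_measurable M"
  and ind: "indep_vars (\<lambda>_. borel) X UNIV"
  and dist: "\<And>i. distr M borel (X i) = distr M borel (X 0)"
begin

lemma rw_meas[measurable]: "rw X j \<in> borel_measurable M"
  unfolding rw_def by measurable

definition B :: "real \<Rightarrow> nat \<Rightarrow> 'a \<Rightarrow> real" where
  "B t k \<omega> = (if \<forall>j\<in>{..k}. rw X j \<omega> \<le> t then 1 else 0)"

definition A :: "real \<Rightarrow> nat \<Rightarrow> 'a set" where
  "A t k = {\<omega>\<in>space M. \<forall>j\<in>{..k}. rw X j \<omega> \<le> t}"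

lemma A_sets[measurable]: "A t k \<in> sets M"
  unfolding A_def by measurable

lemma B_meas[measurable]: "B t k \<in> borel_measurable M"
  unfolding B_def by measurable

lemma g_meas: fixes t :: real and k :: nat shows "(\<lambda>f. if \<forall>j\<in>{..k}. (\<Sum>i<j. f i) \<le> t then 1 else (0::real))
   \<in> borel_measurable (PiM {..<k} (\<lambda>_. borel))"
proof -
  have "(\<lambda>f. \<Sum>i<j. f i) \<in> borel_measurable (PiM {..<k} (\<lambda>_. (borel::real measure)))" if "j \<in> {..k}" for j
    using that by (intro borel_measurable_sum measurable_component_singleton) auto
  hence "{f \<in> space (PiM {..<k} (\<lambda>_. (borel::real measure))). (\<Sum>i<j. f i) \<le> t} \<in> sets (PiM {..<k} (\<lambda>_. borel))" if "j \<in> {..k}" for j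
    using that by measurable
  hence "{f \<in> space (PiM {..<k} (\<lambda>_. (borel::real measure))). \<forall>j\<in>{..k}. (\<Sum>i<j. f i) \<le> t} \<in> sets (PiM {..<k} (\<lambda>_. borel))"
    by (intro sets.sets_Collect_finite_All') auto
  then show ?thesis
    by (intro measurable_If) auto
qed

lemma indep_B: "indep_var borel (B t k) borel (X k)"
proof -
  have "indep_var
    borel ((\<lambda>f. if \<forall>j\<in>{..k}. (\<Sum>i<j. f i) \<le> t then 1 else (0::real)) \<circ> (\<lambda>\<omega>. restrict (\<lambda>i. X i \<omega>) {..<k}))
    borel ((\<lambda>f. f k) \<circ> (\<lambda>\<omega>. restrict (\<lambda>i. X i \<omega>) {k}))"
    by (intro indep_var_compose[OF indep_var_restrict[OF ind]] g_meas) auto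
  also have "((\<lambda>f. f k) \<circ> (\<lambda>\<omega>. restrict (\<lambda>i. X i \<omega>) {k})) = X k"
    by auto
  also have "((\<lambda>f. if \<forall>j\<in>{..k}. (\<Sum>i<j. f i) \<le> t then 1 else (0::real)) \<circ> (\<lambda>\<omega>. restrict (\<lambda>i. X i \<omega>) {..<k})) = B t k"
    by (rule ext) (simp add: B_def rw_def)
  finally show ?thesis .
qed

lemma rw_Suc: "rw X (Suc n) \<omega> = rw X n \<omega> + X n \<omega>"
  by (simp add: rw_def)

lemma rw_0: "rw X 0 \<omega> = 0"
  by (simp add: rw_def)

lemma distr_int:
  fixes \<phi> :: "real \<Rightarrow> real"
  assumes "\<phi> \<in> borel_measurable borel"
  shows "integral\<^sup>L M (\<lambda>\<omega>. \<phi> (X k \<omega>)) = integral\<^sup>L M (\<lambda>\<omega>. \<phi> (X 0 \<omega>))"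
proof -
  have "integral\<^sup>L M (\<lambda>\<omega>. \<phi> (X k \<omega>)) = integral\<^sup>L (distr M borel (X k)) \<phi>"
    using integral_distr[OF Xm[of k] assms] by simp
  also have "\<dots> = integral\<^sup>L (distr M borel (X 0)) \<phi>" by (simp only: dist[of k])
  also have "\<dots> = integral\<^sup>L M (\<lambda>\<omega>. \<phi> (X 0 \<omega>))"
    using integral_distr[OF Xm[of 0] assms] by simp
  finally show ?thesis .
qed

lemma distr_integrable:
  fixes \<phi> :: "real \<Rightarrow> real"
  assumes "\<phi> \<in> borel_measurable borel" "integrable M (\<lambda>\<omega>. \<phi> (X 0 \<omega>))"
  shows "integrable M (\<lambda>\<omega>. \<phi> (X k \<omega>))"
proof -
  have "integrable (distr M borel (X 0)) \<phi>"
    using assms integrable_distr_eq[OF Xm[of 0] assms(1)] by simp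
  hence "integrable (distr M borel (X k)) \<phi>" by (simp only: dist[of k])
  thus ?thesis using assms integrable_distr_eq[OF Xm[of k] assms(1)] by simp
qed

lemma int_B: "integral\<^sup>L M (B t k) = measure M (A t k)"
proof -
  have "integral\<^sup>L M (B t k) = integral\<^sup>L M (indicator (A t k) :: 'a \<Rightarrow> real)"
    by (rule Bochner_Integration.integral_cong) (auto simp: A_def B_def indicator_def)
  also have "\<dots> = measure M (A t k)" by simp
  finally show ?thesis .
qed

lemma indep_int:
  fixes \<phi> :: "real \<Rightarrow> real"
  assumes phi[measurable]: "\<phi> \<in> borel_measurable borel" and int: "integrable M (\<lambda>\<omega>. \<phi> (X 0 \<omega>))"
  shows "integral\<^sup>L M (\<lambda>\<omega>. B t k \<omega> * \<phi> (X k \<omega>)) = measure M (A t k) * integral\<^sup>L M (\<lambda>\<omega>. \<phi> (X 0 \<omega>))"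
    and "integrable M (\<lambda>\<omega>. B t k \<omega> * \<phi> (X k \<omega>))"
proof -
  have iv: "indep_var borel (id \<circ> B t k) borel (\<phi> \<circ> X k)"
    by (rule indep_var_compose[OF indep_B]) auto
  have iB: "integrable M (B t k)"
    by (rule integrable_const_bound[where B=1]) (auto simp: B_def)
  hence iB': "integrable M (id \<circ> B t k)" by (simp add: comp_def)
  have iX: "integrable M (\<phi> \<circ> X k)"
    using distr_integrable[OF phi int] by (simp add: comp_def)
  show "integral\<^sup>L M (\<lambda>\<omega>. B t k \<omega> * \<phi> (X k \<omega>)) = measure M (A t k) * integral\<^sup>L M (\<lambda>\<omega>. \<phi> (X 0 \<omega>))"
    using indep_var_lebesgue_integral[OF iv iB' iX]
    by (simp add: comp_def int_B distr_int[OF phi, of k])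
  show "integrable M (\<lambda>\<omega>. B t k \<omega> * \<phi> (X k \<omega>))"
    using indep_var_integrable[OF iv iB' iX] by (simp add: comp_def)
qed

lemma wald_pointwise:
  assumes "0 \<le> t" "0 \<le> L"
  shows "(\<Sum>k<N. B t k \<omega> * min (X k \<omega>) L) \<le> (if \<forall>j\<in>{..N}. rw X j \<omega> \<le> t then rw X N \<omega> else t + L)"
proof (induction N)
  case 0
  then show ?case using assms by (simp add: rw_0)
next
  case (Suc N)
  have split: "(\<forall>j\<in>{..Suc N}. rw X j \<omega> \<le> t) \<longleftrightarrow> (\<forall>j\<in>{..N}. rw X j \<omega> \<le> t) \<and> rw X (Suc N) \<omega> \<le> t"
    by (auto simp: le_Suc_eq)
  show ?case
  proof (cases "\<forall>j\<in>{..N}. rw X j \<omega> \<le> t")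
    case True
    hence BN: "B t N \<omega> = 1" by (simp add: B_def)
    from Suc.IH True have ih: "(\<Sum>k<N. B t k \<omega> * min (X k \<omega>) L) \<le> rw X N \<omega>" by simp
    have tN: "rw X N \<omega> \<le> t" using True by auto
    have m1: "min (X N \<omega>) L \<le> L" "min (X N \<omega>) L \<le> X N \<omega>" by auto
    have a1: "(\<Sum>k<N. B t k \<omega> * min (X k \<omega>) L) + min (X N \<omega>) L \<le> t + L"
      using ih tN m1 by linarith
    have a2: "(\<Sum>k<N. B t k \<omega> * min (X k \<omega>) L) + min (X N \<omega>) L \<le> rw X (Suc N) \<omega>"
      using ih m1 by (simp add: rw_Suc)
    show ?thesis using a1 a2 BN True unfolding split by auto
  next
    case False
    hence BN: "B t N \<omega> = 0" by (simp add: B_def)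
    from Suc.IH False have ih: "(\<Sum>k<N. B t k \<omega> * min (X k \<omega>) L) \<le> t + L" by simp
    show ?thesis using ih BN False unfolding split by auto
  qed
qed

lemma wald:
  assumes "0 \<le> t" "0 \<le> L" and int: "integrable M (X 0)"
  shows "(\<Sum>k<N. measure M (A t k)) * integral\<^sup>L M (\<lambda>\<omega>. min (X 0 \<omega>) L) \<le> t + L"
proof -
  have phi: "(\<lambda>x. min x L) \<in> borel_measurable borel" by measurable
  have intm: "integrable M (\<lambda>\<omega>. min (X 0 \<omega>) L)"
    by (rule Bochner_Integration.integrable_bound[where f="\<lambda>\<omega>. \<bar>X 0 \<omega>\<bar> + L"])
       (use int assms in auto)
  have "(\<Sum>k<N. measure M (A t k)) * integral\<^sup>L M (\<lambda>\<omega>. min (X 0 \<omega>) L)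
      = (\<Sum>k<N. integral\<^sup>L M (\<lambda>\<omega>. B t k \<omega> * min (X k \<omega>) L))"
    unfolding sum_distrib_right by (rule sum.cong) (simp_all add: indep_int(1)[OF phi intm])
  also have "\<dots> = integral\<^sup>L M (\<lambda>\<omega>. \<Sum>k<N. B t k \<omega> * min (X k \<omega>) L)"
    by (rule Bochner_Integration.integral_sum[where I="{..<N}" and f="\<lambda>k \<omega>. B t k \<omega> * min (X k \<omega>) L", symmetric]) (use indep_int(2)[OF phi intm] in auto)
  also have "\<dots> \<le> integral\<^sup>L M (\<lambda>\<omega>. t + L)"
  proof (rule integral_mono)
    show "integrable M (\<lambda>\<omega>. \<Sum>k<N. B t k \<omega> * min (X k \<omega>) L)"
      by (rule Bochner_Integration.integrable_sum) (use indep_int(2)[OF phi intm] in auto)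
    show "(\<lambda>\<omega>. \<Sum>k<N. B t k \<omega> * min (X k \<omega>) L) x \<le> t + L" for x
    proof -
      have w: "(\<Sum>k<N. B t k x * min (X k x) L) \<le> (if \<forall>j\<in>{..N}. rw X j x \<le> t then rw X N x else t + L)"
        by (rule wald_pointwise[OF assms(1,2)])
      show ?thesis
      proof (cases "\<forall>j\<in>{..N}. rw X j x \<le> t")
        case True
        then have r: "rw X N x \<le> t" by auto
        have "(\<Sum>k<N. B t k x * min (X k x) L) \<le> rw X N x" using w True by simp
        then show ?thesis using r assms by linarith
      next
        case False
        then show ?thesis using w by (simp only: if_False)
      qed
    qed
  qed auto
  also have "\<dots> = t + L" by (simp add: prob_space)
  finally show ?thesis .
qed

lemma exists_L:
  assumes int: "integrable M (X 0)" and pos: "expectation (X 0) > 0"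
  shows "\<exists>L\<ge>0. integral\<^sup>L M (\<lambda>\<omega>. min (X 0 \<omega>) L) > 0"
proof -
  have lim: "(\<lambda>n. integral\<^sup>L M (\<lambda>\<omega>. min (X 0 \<omega>) (real n))) \<longlonglongrightarrow> integral\<^sup>L M (X 0)"
  proof (rule integral_dominated_convergence[where w="\<lambda>\<omega>. \<bar>X 0 \<omega>\<bar>"])
    show "AE x in M. (\<lambda>n. min (X 0 x) (real n)) \<longlonglongrightarrow> X 0 x"
    proof (rule AE_I2, rule tendsto_eventually)
      fix x
      obtain n :: nat where "X 0 x \<le> real n" using real_arch_simple by blast
      then show "\<forall>\<^sub>F n in sequentially. min (X 0 x) (real n) = X 0 x"
        unfolding eventually_sequentially
        by (intro exI[of _ n]) (auto simp: min_def)
    qed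
    show "AE x in M. norm (min (X 0 x) (real n)) \<le> \<bar>X 0 x\<bar>" for n
      by (rule AE_I2) auto
  qed (use int in auto)
  then have "\<forall>\<^sub>F n in sequentially. integral\<^sup>L M (\<lambda>\<omega>. min (X 0 \<omega>) (real n)) > 0"
    using pos by (rule order_tendstoD)
  then obtain n where "integral\<^sup>L M (\<lambda>\<omega>. min (X 0 \<omega>) (real n)) > 0"
    by (auto simp: eventually_sequentially)
  then show ?thesis by (intro exI[of _ "real n"]) auto
qed

lemma sumA:
  assumes "0 \<le> t" "0 \<le> L" and int: "integrable M (X 0)"
    and mu: "integral\<^sup>L M (\<lambda>\<omega>. min (X 0 \<omega>) L) > 0"
  shows "summable (\<lambda>k. measure M (A t k))"
    and "(\<Sum>k. measure M (A t k)) \<le> (t + L) / integral\<^sup>L M (\<lambda>\<omega>. min (X 0 \<omega>) L)"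
proof -
  have b: "(\<Sum>k<N. measure M (A t k)) \<le> (t + L) / integral\<^sup>L M (\<lambda>\<omega>. min (X 0 \<omega>) L)" for N
    using wald[OF assms(1-3), of N] mu by (simp add: pos_le_divide_eq)
  show s: "summable (\<lambda>k. measure M (A t k))"
    by (rule summableI_nonneg_bounded[OF _ b]) auto
  show "(\<Sum>k. measure M (A t k)) \<le> (t + L) / integral\<^sup>L M (\<lambda>\<omega>. min (X 0 \<omega>) L)"
    by (rule suminf_le_const[OF s b])
qed

lemma null_A:
  assumes s: "summable (\<lambda>k. measure M (A t k))"
  shows "measure M (\<Inter>k. A t k) = 0"
proof -
  have le: "measure M (\<Inter>k. A t k) \<le> measure M (A t k)" for k
    by (rule finite_measure_mono) auto
  have "(\<lambda>k. measure M (A t k)) \<longlonglongrightarrow> 0"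
    using summable_LIMSEQ_zero[OF s] .
  hence "measure M (\<Inter>k. A t k) \<le> 0"
    by (rule LIMSEQ_le_const) (use le in auto)
  thus ?thesis using measure_nonneg[of M "\<Inter>k. A t k"] by linarith
qed

lemma prob_tail:
  assumes int: "integrable M (X 0)"
  shows "measure M (A t n \<inter> {\<omega>\<in>space M. X n \<omega> > s}) = measure M (A t n) * measure M {\<omega>\<in>space M. X 0 \<omega> > s}"
proof -
  have phi: "(indicator {s<..} :: real \<Rightarrow> real) \<in> borel_measurable borel" by measurable
  have i0: "integrable M (\<lambda>\<omega>. (indicator {s<..} :: real \<Rightarrow> real) (X 0 \<omega>))"
    by (rule integrable_const_bound[where B=1]) (auto simp: indicator_def)
  have "measure M (A t n \<inter> {\<omega>\<in>space M. X n \<omega> > s}) = integral\<^sup>L M (indicator (A t n \<inter> {\<omega>\<in>space M. X n \<omega> > s}) :: 'a \<Rightarrow> real)"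
    by simp
  also have "\<dots> = integral\<^sup>L M (\<lambda>\<omega>. B t n \<omega> * (indicator {s<..} :: real \<Rightarrow> real) (X n \<omega>))"
    by (rule Bochner_Integration.integral_cong) (auto simp: A_def B_def indicator_def)
  also have "\<dots> = measure M (A t n) * integral\<^sup>L M (\<lambda>\<omega>. (indicator {s<..} :: real \<Rightarrow> real) (X 0 \<omega>))"
    by (rule indep_int(1)[OF phi i0])
  also have "integral\<^sup>L M (\<lambda>\<omega>. (indicator {s<..} :: real \<Rightarrow> real) (X 0 \<omega>)) = integral\<^sup>L M (indicator {\<omega>\<in>space M. X 0 \<omega> > s} :: 'a \<Rightarrow> real)"
    by (rule Bochner_Integration.integral_cong) (auto simp: indicator_def)
  also have "\<dots> = measure M {\<omega>\<in>space M. X 0 \<omega> > s}" by simp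
  finally show ?thesis .
qed

lemma main_bound:
  assumes t: "0 \<le> t" and a: "0 < a" "a < 1" and int: "integrable M (X 0)"
    and s: "summable (\<lambda>k. measure M (A t k))"
  shows "measure M {\<omega>\<in>space M. rw X (passage X t \<omega> - 1) \<omega> < a * t}
    \<le> (\<Sum>n. measure M (A t n)) * measure M {\<omega>\<in>space M. X 0 \<omega> > (1 - a) * t}"
proof -
  define q where "q = measure M {\<omega>\<in>space M. X 0 \<omega> > (1 - a) * t}"
  define C where "C n = A t n \<inter> {\<omega>\<in>space M. X n \<omega> > (1 - a) * t}" for n
  have C_sets: "C n \<in> sets M" for n unfolding C_def by measurable
  have sub: "{\<omega>\<in>space M. rw X (passage X t \<omega> - 1) \<omega> < a * t} \<subseteq> (\<Inter>k. A t k) \<union> (\<Union>n. C n)"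
  proof
    fix \<omega> assume "\<omega> \<in> {\<omega>\<in>space M. rw X (passage X t \<omega> - 1) \<omega> < a * t}"
    hence sp: "\<omega> \<in> space M" and ev: "rw X (passage X t \<omega> - 1) \<omega> < a * t" by auto
    show "\<omega> \<in> (\<Inter>k. A t k) \<union> (\<Union>n. C n)"
    proof (cases "\<exists>n. rw X n \<omega> > t")
      case False
      hence "\<omega> \<in> A t k" for k using sp by (auto simp: A_def not_less)
      thus ?thesis by auto
    next
      case True
      define \<tau> where "\<tau> = passage X t \<omega>"
      have h1: "rw X \<tau> \<omega> > t" unfolding \<tau>_def passage_def using True by (rule LeastI_ex)
      have h2: "\<not> rw X j \<omega> > t" if "j < \<tau>" for j
        using that unfolding \<tau>_def passage_def by (rule not_less_Least)
      have "\<tau> \<noteq> 0"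
      proof
        assume "\<tau> = 0" thus False using h1 t by (simp add: rw_0)
      qed
      then obtain n where n: "\<tau> = Suc n" using not0_implies_Suc by blast
      have "\<omega> \<in> A t n" using sp h2 n by (auto simp: A_def not_less)
      moreover have "rw X n \<omega> < a * t" using ev n by (simp add: \<tau>_def)
      moreover have "rw X (Suc n) \<omega> > t" using h1 n by simp
      ultimately have "\<omega> \<in> C n" using sp by (auto simp: C_def rw_Suc algebra_simps)
      thus ?thesis by auto
    qed
  qed
  have mC: "measure M (C n) = measure M (A t n) * q" for n
    unfolding C_def q_def by (rule prob_tail[OF int])
  have sC: "summable (\<lambda>n. measure M (C n))"
    unfolding mC by (rule summable_mult2[OF s])
  have "measure M {\<omega>\<in>space M. rw X (passage X t \<omega> - 1) \<omega> < a * t} \<le> measure M ((\<Inter>k. A t k) \<union> (\<Union>n. C n))"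
    by (rule finite_measure_mono[OF sub]) (use C_sets in auto)
  also have "\<dots> \<le> measure M (\<Inter>k. A t k) + measure M (\<Union>n. C n)"
    by (rule measure_Un_le) (use C_sets in auto)
  also have "measure M (\<Union>n. C n) \<le> (\<Sum>n. measure M (C n))"
    by (rule finite_measure_subadditive_countably[OF _ sC]) (use C_sets in auto)
  also have "(\<Sum>n. measure M (C n)) = (\<Sum>n. measure M (A t n)) * q"
    unfolding mC by (rule suminf_mult2[OF s, symmetric])
  finally show ?thesis using null_A[OF s] by (simp add: q_def)
qed

lemma tail_sq:
  assumes c: "0 < c" and int2: "integrable M (\<lambda>\<omega>. (max 0 (X 0 \<omega>))\<^sup>2)"
  shows "((\<lambda>t. t\<^sup>2 * measure M {\<omega>\<in>space M. X 0 \<omega> > c * t}) \<longlongrightarrow> 0) at_top"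
proof -
  define g where "g t = integral\<^sup>L M (\<lambda>\<omega>. (max 0 (X 0 \<omega>))\<^sup>2 * indicator {c*t<..} (X 0 \<omega>))" for t
  have gl: "(g \<longlongrightarrow> integral\<^sup>L M (\<lambda>\<omega>. 0::real)) at_top"
    unfolding g_def
  proof (rule integral_dominated_convergence_at_top[where w="\<lambda>\<omega>. (max 0 (X 0 \<omega>))\<^sup>2"])
    show "AE x in M. ((\<lambda>t. (max 0 (X 0 x))\<^sup>2 * indicator {c*t<..} (X 0 x)) \<longlongrightarrow> 0) at_top"
    proof (rule AE_I2, rule tendsto_eventually)
      fix x
      show "\<forall>\<^sub>F t in at_top. (max 0 (X 0 x))\<^sup>2 * indicator {c*t<..} (X 0 x) = (0::real)"
        using eventually_ge_at_top[of "X 0 x / c"]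
      proof eventually_elim
        case (elim t)
        hence "X 0 x \<le> c * t" using c by (simp add: divide_le_eq mult.commute)
        thus ?case by (simp add: indicator_def)
      qed
    qed
    show "\<forall>\<^sub>F i in at_top. AE x in M. norm ((max 0 (X 0 x))\<^sup>2 * indicator {c*i<..} (X 0 x)) \<le> (max 0 (X 0 x))\<^sup>2"
      by (intro always_eventually allI AE_I2) (auto simp: indicator_def)
  qed (use int2 in auto)
  hence gl': "(g \<longlongrightarrow> 0) at_top" by simp
  have le: "t\<^sup>2 * measure M {\<omega>\<in>space M. X 0 \<omega> > c * t} \<le> g t / c\<^sup>2" if t: "t \<ge> 0" for t
  proof -
    have "c\<^sup>2 * (t\<^sup>2 * measure M {\<omega>\<in>space M. X 0 \<omega> > c * t})
        = integral\<^sup>L M (\<lambda>\<omega>. (c * t)\<^sup>2 * indicator {\<omega>\<in>space M. X 0 \<omega> > c * t} \<omega>)"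
      by (simp add: power_mult_distrib)
    also have "\<dots> \<le> g t"
      unfolding g_def
    proof (rule integral_mono)
      show "integrable M (\<lambda>\<omega>. (c * t)\<^sup>2 * indicator {\<omega>\<in>space M. X 0 \<omega> > c * t} \<omega>)"
        by (intro integrable_mult_right integrable_real_indicator) (auto simp: less_top[symmetric])
      show "integrable M (\<lambda>\<omega>. (max 0 (X 0 \<omega>))\<^sup>2 * indicator {c*t<..} (X 0 \<omega>))"
        by (rule Bochner_Integration.integrable_bound[OF int2]) (auto simp: indicator_def)
      fix \<omega> assume sp: "\<omega> \<in> space M"
      show "(c * t)\<^sup>2 * indicator {\<omega>\<in>space M. X 0 \<omega> > c * t} \<omega> \<le> (max 0 (X 0 \<omega>))\<^sup>2 * indicator {c*t<..} (X 0 \<omega>)"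
      proof (cases "X 0 \<omega> > c * t")
        case True
        have ct: "0 \<le> c * t" using c t by simp
        have "(c * t)\<^sup>2 \<le> (max 0 (X 0 \<omega>))\<^sup>2"
          by (rule power_mono) (use True ct in auto)
        thus ?thesis using True sp by (simp add: indicator_def)
      qed (simp add: indicator_def)
    qed
    finally show ?thesis using c by (simp add: le_divide_eq mult.commute)
  qed
  have gl2: "((\<lambda>t. g t / c\<^sup>2) \<longlongrightarrow> 0) at_top"
    using tendsto_divide_zero[OF gl', of "c\<^sup>2"] .
  show ?thesis
  proof (rule tendsto_sandwich[OF _ _ tendsto_const gl2])
    show "\<forall>\<^sub>F t in at_top. 0 \<le> t\<^sup>2 * measure M {\<omega>\<in>space M. X 0 \<omega> > c * t}" by simp
    show "\<forall>\<^sub>F t in at_top. t\<^sup>2 * measure M {\<omega>\<in>space M. X 0 \<omega> > c * t} \<le> g t / c\<^sup>2"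
      using eventually_ge_at_top[of 0] by eventually_elim (rule le)
  qed
qed

end

theorem mainTheorem15:
  fixes M :: "'a measure" and X :: "nat \<Rightarrow> 'a \<Rightarrow> real" and a :: real
  assumes "prob_space M"
    and "\<And>i. X i \<in> borel_measurable M"
    and "prob_space.indep_vars M (\<lambda>_. borel) X UNIV"
    and "\<And>i. distr M borel (X i) = distr M borel (X 0)"
    and "integrable M (X 0)"
    and "prob_space.expectation M (X 0) > 0"
    and "integrable M (\<lambda>\<omega>. (max 0 (X 0 \<omega>))\<^sup>2)"
    and "0 < a" and "a < 1"
  shows "((\<lambda>t. t * measure M {\<omega> \<in> space M. rw X (passage X t \<omega> - 1) \<omega> < a * t})
           \<longlongrightarrow> 0) at_top"
proof -
  interpret P: rwalk M X
    using assms(1-4) by (intro rwalk.intro rwalk_axioms.intro) auto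
  obtain L where L: "L \<ge> 0" and mu: "integral\<^sup>L M (\<lambda>\<omega>. min (X 0 \<omega>) L) > 0"
    using P.exists_L[OF assms(5,6)] by blast
  define \<mu> where "\<mu> = integral\<^sup>L M (\<lambda>\<omega>. min (X 0 \<omega>) L)"
  define q where "q t = measure M {\<omega>\<in>space M. X 0 \<omega> > (1 - a) * t}" for t
  have tq2: "((\<lambda>t. t\<^sup>2 * q t) \<longlongrightarrow> 0) at_top"
    unfolding q_def by (rule P.tail_sq) (use assms in auto)
  have tq: "((\<lambda>t. t * q t) \<longlongrightarrow> 0) at_top"
  proof (rule tendsto_sandwich[OF _ _ tendsto_const tq2])
    show "\<forall>\<^sub>F t in at_top. 0 \<le> t * q t"
      using eventually_ge_at_top[of 0] by eventually_elim (simp add: q_def)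
    show "\<forall>\<^sub>F t in at_top. t * q t \<le> t\<^sup>2 * q t"
      using eventually_ge_at_top[of 1]
    proof eventually_elim
      case (elim t)
      have "t \<le> t\<^sup>2" using elim by (simp add: power2_eq_square)
      thus ?case by (rule mult_right_mono) (simp add: q_def)
    qed
  qed
  have rhs: "((\<lambda>t. (t\<^sup>2 * q t + L * (t * q t)) / \<mu>) \<longlongrightarrow> 0) at_top"
    using tendsto_divide[OF tendsto_add[OF tq2 tendsto_mult[OF tendsto_const tq]] tendsto_const, of \<mu>] mu
    by (simp add: \<mu>_def)
  show ?thesis
  proof (rule tendsto_sandwich[OF _ _ tendsto_const rhs])
    show "\<forall>\<^sub>F t in at_top. 0 \<le> t * measure M {\<omega> \<in> space M. rw X (passage X t \<omega> - 1) \<omega> < a * t}"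
      using eventually_ge_at_top[of 0] by eventually_elim simp
    show "\<forall>\<^sub>F t in at_top. t * measure M {\<omega> \<in> space M. rw X (passage X t \<omega> - 1) \<omega> < a * t}
        \<le> (t\<^sup>2 * q t + L * (t * q t)) / \<mu>"
      using eventually_ge_at_top[of 0]
    proof eventually_elim
      case (elim t)
      have s: "summable (\<lambda>k. measure M (P.A t k))"
        and sb: "(\<Sum>k. measure M (P.A t k)) \<le> (t + L) / \<mu>"
        using P.sumA[OF elim L assms(5) mu] by (auto simp: \<mu>_def)
      have qn: "0 \<le> q t" by (simp add: q_def)
      have "measure M {\<omega> \<in> space M. rw X (passage X t \<omega> - 1) \<omega> < a * t} \<le> (\<Sum>k. measure M (P.A t k)) * q t"
        unfolding q_def by (rule P.main_bound[OF elim assms(8,9,5) s])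
      also have "\<dots> \<le> (t + L) / \<mu> * q t"
        by (rule mult_right_mono[OF sb qn])
      finally have "t * measure M {\<omega> \<in> space M. rw X (passage X t \<omega> - 1) \<omega> < a * t} \<le> t * ((t + L) / \<mu> * q t)"
        by (rule mult_left_mono) (use elim in auto)
      also have "\<dots> = (t\<^sup>2 * q t + L * (t * q t)) / \<mu>"
        by (simp add: power2_eq_square algebra_simps)
      finally show ?case .
    qed
  qed
qed

end
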